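(* Let $n\ge 2$, $c_1,\dots,c_n>0$, and fix $i\in\{1,\dots,n\}$. Let $Q_i\in\mathbb{R}^{n\times n}$ be the symmetric matrix with $(Q_i)_{ii}=\frac{n-2}{c_i^2}$, $(Q_i)_{jj}=\frac{1}{c_j^2}$ and $(Q_i)_{ij}=(Q_i)_{ji}=-\frac{1}{c_ic_j}$ for $j\neq i$, and all other entries $0$. Let $c_o=\max_{j\neq i}c_j$ and $c_*=\min_{j\neq i}c_j$, and $S=\sum_{j=1,j\neq i}^n\frac{1}{c_j^2}$. Then every eigenvalue $\lambda$ of $Q_i$ satisfies $$\frac{1}{2}\left(\frac{n-2}{c_i^2}+\frac{1}{c_o^2}-\frac{1}{c_i}\sqrt{\left(\frac{n-2}{c_i}-\frac{c_i}{c_o^2}\right)^2+4S}\right)\ \le\ \lambda\ \le\ \frac{1}{2}\left(\frac{n-2}{c_i^2}+\frac{1}{c_*^2}+\frac{1}{c_i}\sqrt{\left(\frac{n-2}{c_i}-\frac{c_i}{c_*^2}\right)^2+4S}\right).$$ *)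

theory Defs
  imports "Jordan_Normal_Form.Char_Poly"
begin

text \<open>The matrix Q_i (0-based indices: rows/columns 0..n-1, fixed index i < n).\<close>
definition Qmat :: "nat \<Rightarrow> (nat \<Rightarrow> real) \<Rightarrow> nat \<Rightarrow> real mat" where
  "Qmat n c i = mat n n (\<lambda>(j, k).
     if j = k then (if j = i then (real n - 2) / (c i)\<^sup>2 else 1 / (c j)\<^sup>2)
     else if j = i \<or> k = i then - 1 / (c j * c k)
     else 0)"

end

theory Submission
  imports Defs
begin

lemma sqrt_step:
  fixes t X ci :: real
  assumes "ci > 0" "t\<^sup>2 \<le> X / (4 * ci\<^sup>2)"
  shows "t \<le> (1/(2*ci)) * sqrt X"
proof -
  have "t \<le> sqrt (t\<^sup>2)" by simp
  also have "\<dots> \<le> sqrt (X / (4 * ci\<^sup>2))" using assms(2) by (rule real_sqrt_le_mono)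
  also have "\<dots> = sqrt X / sqrt (4 * ci\<^sup>2)" by (simp add: real_sqrt_divide)
  also have "sqrt (4 * ci\<^sup>2) = 2 * ci" using assms(1) by (simp add: real_sqrt_mult)
  finally show ?thesis by simp
qed

lemma upper_core:
  fixes K :: "nat set" and c x :: "nat \<Rightarrow> real" and p lam cs S :: real
  assumes fin: "finite K" and iK: "i \<notin> K" and ci: "c i > 0"
    and csk: "\<forall>k\<in>K. cs \<le> c k" and cs: "cs > 0"
    and row: "\<forall>k\<in>K. x k / (c k)\<^sup>2 - x i / (c k * c i) = lam * x k"
    and rowi: "p / (c i)\<^sup>2 * x i - (\<Sum>k\<in>K. x k / (c i * c k)) = lam * x i"
    and nz: "x i \<noteq> 0 \<or> (\<exists>k\<in>K. x k \<noteq> 0)"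
    and S: "S = (\<Sum>k\<in>K. 1 / (c k)\<^sup>2)"
  shows "lam \<le> (1/2) * (p / (c i)\<^sup>2 + 1 / cs\<^sup>2
            + (1 / c i) * sqrt ((p / c i - c i / cs\<^sup>2)\<^sup>2 + 4 * S))"
proof -
  define M where "M = 1 / cs\<^sup>2"
  define a where "a = p / (c i)\<^sup>2"
  define A where "A = p / c i - c i / cs\<^sup>2"
  have Aa: "A / c i = a - M" using ci unfolding A_def a_def M_def by (simp add: field_simps power2_eq_square)
  have S0: "S \<ge> 0" unfolding S by (intro sum_nonneg) auto
  have ck: "c k > 0" if "k \<in> K" for k using csk cs that by force
  have dk: "1 / (c k)\<^sup>2 \<le> M" if "k \<in> K" for k
  proof -
    have "cs\<^sup>2 \<le> (c k)\<^sup>2" using csk that cs by (intro power_mono) auto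
    then show ?thesis unfolding M_def using cs by (simp add: frac_le)
  qed
  show ?thesis
  proof (cases "lam \<le> M")
    case True
    have "\<bar>A\<bar> \<le> sqrt (A\<^sup>2 + 4 * S)"
    proof -
      have "\<bar>A\<bar> = sqrt (A\<^sup>2)" by simp
      also have "\<dots> \<le> sqrt (A\<^sup>2 + 4 * S)" using S0 by (intro real_sqrt_le_mono) auto
      finally show ?thesis .
    qed
    hence "\<bar>A\<bar> / c i \<le> (1 / c i) * sqrt (A\<^sup>2 + 4 * S)" using ci by (simp add: divide_right_mono)
    moreover have "\<bar>A\<bar> / c i = \<bar>a - M\<bar>" using Aa ci by (metis abs_div_pos)
    ultimately have r: "\<bar>a - M\<bar> \<le> 1 / c i * sqrt (A\<^sup>2 + 4 * S)" by simp
    have "lam \<le> 1 / 2 * (a + M + 1 / c i * sqrt (A\<^sup>2 + 4 * S))" using r True by (simp add: abs_le_iff)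
    then show ?thesis unfolding M_def a_def A_def .
  next
    case False
    hence lM: "lam > M" by simp
    have pos: "lam - 1 / (c k)\<^sup>2 > 0" if "k \<in> K" for k using dk[OF that] lM by linarith
    have xk: "x k = - x i / (c k * c i * (lam - 1 / (c k)\<^sup>2))" if "k \<in> K" for k
    proof -
      have "x k * (lam - 1 / (c k)\<^sup>2) = - x i / (c k * c i)" using row that by (simp add: algebra_simps)
      then show ?thesis using pos[OF that] ck[OF that] ci by (simp add: field_simps)
    qed
    have xi: "x i \<noteq> 0" using nz xk by force
    have "(\<Sum>k\<in>K. x k / (c i * c k)) = (\<Sum>k\<in>K. - x i / (c i)\<^sup>2 * ((1 / (c k)\<^sup>2) / (lam - 1 / (c k)\<^sup>2)))"
    proof (rule sum.cong)
      fix k assume k: "k \<in> K"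
      show "x k / (c i * c k) = - x i / (c i)\<^sup>2 * ((1 / (c k)\<^sup>2) / (lam - 1 / (c k)\<^sup>2))"
      proof -
        have "x k / (c i * c k) = - x i / ((c i)\<^sup>2 * ((c k)\<^sup>2 * (lam - 1 / (c k)\<^sup>2)))"
          by (subst xk[OF k]) (simp add: power2_eq_square mult_ac)
        also have "(c k)\<^sup>2 * (lam - 1 / (c k)\<^sup>2) = (lam - 1 / (c k)\<^sup>2) / (1 / (c k)\<^sup>2)"
          using ck[OF k] by simp
        finally show ?thesis by simp
      qed
    qed simp
    also have "\<dots> = - x i / (c i)\<^sup>2 * (\<Sum>k\<in>K. (1 / (c k)\<^sup>2) / (lam - 1 / (c k)\<^sup>2))"
      by (simp add: sum_distrib_left)
    finally have e1: "(\<Sum>k\<in>K. x k / (c i * c k)) = - x i / (c i)\<^sup>2 * (\<Sum>k\<in>K. (1 / (c k)\<^sup>2) / (lam - 1 / (c k)\<^sup>2))" .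
    define T where "T = (\<Sum>k\<in>K. (1 / (c k)\<^sup>2) / (lam - 1 / (c k)\<^sup>2))"
    have "a * x i + x i / (c i)\<^sup>2 * T = lam * x i" using rowi e1 unfolding a_def T_def by simp
    hence "x i * (a - lam + T / (c i)\<^sup>2) = 0" by (simp add: algebra_simps)
    hence "a - lam + T / (c i)\<^sup>2 = 0" using xi by simp
    hence eq: "a - lam = - (1 / (c i)\<^sup>2) * (\<Sum>k\<in>K. (1 / (c k)\<^sup>2) / (lam - 1 / (c k)\<^sup>2))"
      unfolding T_def by simp
    have "(\<Sum>k\<in>K. (1 / (c k)\<^sup>2) / (lam - 1 / (c k)\<^sup>2)) \<le> (\<Sum>k\<in>K. (1 / (c k)\<^sup>2) / (lam - M))"
    proof (rule sum_mono)
      fix k assume k: "k \<in> K"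
      show "(1 / (c k)\<^sup>2) / (lam - 1 / (c k)\<^sup>2) \<le> (1 / (c k)\<^sup>2) / (lam - M)"
        using dk[OF k] lM by (intro divide_left_mono) auto
    qed
    also have "\<dots> = S / (lam - M)" unfolding S by (simp add: sum_divide_distrib)
    finally have le1: "T \<le> S / (lam - M)" unfolding T_def .
    have "lam - a = T / (c i)\<^sup>2" using eq unfolding T_def by simp
    also have "\<dots> \<le> (S / (lam - M)) / (c i)\<^sup>2" using le1 ci by (intro divide_right_mono) auto
    finally have "lam - a \<le> (S / (lam - M)) / (c i)\<^sup>2" .
    hence "(lam - a) * (lam - M) \<le> (S / (lam - M)) / (c i)\<^sup>2 * (lam - M)" using lM
      by (intro mult_right_mono) auto
    also have "\<dots> = S / (c i)\<^sup>2" using lM by simp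
    finally have q: "(lam - a) * (lam - M) \<le> S / (c i)\<^sup>2" .
    define t where "t = lam - (a + M) / 2"
    have "t\<^sup>2 = (lam - a) * (lam - M) + ((a - M)/2)\<^sup>2" unfolding t_def by (simp add: power2_eq_square field_simps)
    also have "\<dots> \<le> S / (c i)\<^sup>2 + ((a - M)/2)\<^sup>2" using q by simp
    also have "\<dots> = S / (c i)\<^sup>2 + (A / c i / 2)\<^sup>2" by (simp only: Aa)
    also have "\<dots> = (A\<^sup>2 + 4 * S) / (4 * (c i)\<^sup>2)" using ci by (simp add: field_simps power2_eq_square)
    finally have "t \<le> (1/(2 * c i)) * sqrt (A\<^sup>2 + 4 * S)" using ci by (intro sqrt_step) auto
    then show ?thesis unfolding t_def M_def a_def A_def by (simp add: field_simps)
  qed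
qed

lemma lower_core:
  fixes K :: "nat set" and c x :: "nat \<Rightarrow> real" and p lam co S :: real
  assumes fin: "finite K" and iK: "i \<notin> K" and ci: "c i > 0"
    and csk: "\<forall>k\<in>K. 0 < c k \<and> c k \<le> co"
    and row: "\<forall>k\<in>K. x k / (c k)\<^sup>2 - x i / (c k * c i) = lam * x k"
    and rowi: "p / (c i)\<^sup>2 * x i - (\<Sum>k\<in>K. x k / (c i * c k)) = lam * x i"
    and nz: "x i \<noteq> 0 \<or> (\<exists>k\<in>K. x k \<noteq> 0)"
    and S: "S = (\<Sum>k\<in>K. 1 / (c k)\<^sup>2)"
  shows "(1/2) * (p / (c i)\<^sup>2 + 1 / co\<^sup>2
            - (1 / c i) * sqrt ((p / c i - c i / co\<^sup>2)\<^sup>2 + 4 * S)) \<le> lam"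
proof -
  define M where "M = 1 / co\<^sup>2"
  define a where "a = p / (c i)\<^sup>2"
  define A where "A = p / c i - c i / co\<^sup>2"
  have Aa: "A / c i = a - M" using ci unfolding A_def a_def M_def by (simp add: field_simps power2_eq_square)
  have S0: "S \<ge> 0" unfolding S by (intro sum_nonneg) auto
  have ck: "c k > 0" if "k \<in> K" for k using csk that by force
  have dk: "M \<le> 1 / (c k)\<^sup>2" if "k \<in> K" for k
  proof -
    have "(c k)\<^sup>2 \<le> co\<^sup>2" using csk that by (intro power_mono) auto
    then show ?thesis unfolding M_def using ck[OF that] by (simp add: frac_le)
  qed
  show ?thesis
  proof (cases "M \<le> lam")
    case True
    have "\<bar>A\<bar> \<le> sqrt (A\<^sup>2 + 4 * S)"
    proof -
      have "\<bar>A\<bar> = sqrt (A\<^sup>2)" by simp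
      also have "\<dots> \<le> sqrt (A\<^sup>2 + 4 * S)" using S0 by (intro real_sqrt_le_mono) auto
      finally show ?thesis .
    qed
    hence "\<bar>A\<bar> / c i \<le> (1 / c i) * sqrt (A\<^sup>2 + 4 * S)" using ci by (simp add: divide_right_mono)
    moreover have "\<bar>A\<bar> / c i = \<bar>a - M\<bar>" using Aa ci by (metis abs_div_pos)
    ultimately have r: "\<bar>a - M\<bar> \<le> 1 / c i * sqrt (A\<^sup>2 + 4 * S)" by simp
    have "1 / 2 * (a + M - 1 / c i * sqrt (A\<^sup>2 + 4 * S)) \<le> lam" using r True by (simp add: abs_le_iff)
    then show ?thesis unfolding M_def a_def A_def .
  next
    case False
    hence lM: "lam < M" by simp
    have pos: "1 / (c k)\<^sup>2 - lam > 0" if "k \<in> K" for k using dk[OF that] lM by linarith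
    have xk: "x k = x i / (c k * c i * (1 / (c k)\<^sup>2 - lam))" if "k \<in> K" for k
    proof -
      have "x k * (1 / (c k)\<^sup>2 - lam) = x i / (c k * c i)" using row that by (simp add: algebra_simps)
      then show ?thesis using pos[OF that] ck[OF that] ci by (simp add: field_simps)
    qed
    have xi: "x i \<noteq> 0" using nz xk by force
    have "(\<Sum>k\<in>K. x k / (c i * c k)) = (\<Sum>k\<in>K. x i / (c i)\<^sup>2 * ((1 / (c k)\<^sup>2) / (1 / (c k)\<^sup>2 - lam)))"
    proof (rule sum.cong)
      fix k assume k: "k \<in> K"
      show "x k / (c i * c k) = x i / (c i)\<^sup>2 * ((1 / (c k)\<^sup>2) / (1 / (c k)\<^sup>2 - lam))"
      proof -
        have "x k / (c i * c k) = x i / ((c i)\<^sup>2 * ((c k)\<^sup>2 * (1 / (c k)\<^sup>2 - lam)))"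
          by (subst xk[OF k]) (simp add: power2_eq_square mult_ac)
        also have "(c k)\<^sup>2 * (1 / (c k)\<^sup>2 - lam) = (1 / (c k)\<^sup>2 - lam) / (1 / (c k)\<^sup>2)"
          using ck[OF k] by simp
        finally show ?thesis by simp
      qed
    qed simp
    also have "\<dots> = x i / (c i)\<^sup>2 * (\<Sum>k\<in>K. (1 / (c k)\<^sup>2) / (1 / (c k)\<^sup>2 - lam))"
      by (simp add: sum_distrib_left)
    finally have e1: "(\<Sum>k\<in>K. x k / (c i * c k)) = x i / (c i)\<^sup>2 * (\<Sum>k\<in>K. (1 / (c k)\<^sup>2) / (1 / (c k)\<^sup>2 - lam))" .
    define T where "T = (\<Sum>k\<in>K. (1 / (c k)\<^sup>2) / (1 / (c k)\<^sup>2 - lam))"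
    have "a * x i - x i / (c i)\<^sup>2 * T = lam * x i" using rowi e1 unfolding a_def T_def by simp
    hence "x i * (a - lam - T / (c i)\<^sup>2) = 0" by (simp add: algebra_simps)
    hence "a - lam - T / (c i)\<^sup>2 = 0" using xi by simp
    hence eq: "a - lam = T / (c i)\<^sup>2" by simp
    have "T \<le> (\<Sum>k\<in>K. (1 / (c k)\<^sup>2) / (M - lam))" unfolding T_def
    proof (rule sum_mono)
      fix k assume k: "k \<in> K"
      show "(1 / (c k)\<^sup>2) / (1 / (c k)\<^sup>2 - lam) \<le> (1 / (c k)\<^sup>2) / (M - lam)"
        using dk[OF k] lM by (intro divide_left_mono) auto
    qed
    also have "\<dots> = S / (M - lam)" unfolding S by (simp add: sum_divide_distrib)
    finally have le1: "T \<le> S / (M - lam)" .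
    have "a - lam = T / (c i)\<^sup>2" using eq .
    also have "\<dots> \<le> (S / (M - lam)) / (c i)\<^sup>2" using le1 ci by (intro divide_right_mono) auto
    finally have "a - lam \<le> (S / (M - lam)) / (c i)\<^sup>2" .
    hence "(a - lam) * (M - lam) \<le> (S / (M - lam)) / (c i)\<^sup>2 * (M - lam)" using lM
      by (intro mult_right_mono) auto
    also have "\<dots> = S / (c i)\<^sup>2" using lM by simp
    finally have q: "(a - lam) * (M - lam) \<le> S / (c i)\<^sup>2" .
    define t where "t = (a + M) / 2 - lam"
    have "t\<^sup>2 = (a - lam) * (M - lam) + ((a - M)/2)\<^sup>2" unfolding t_def by (simp add: power2_eq_square field_simps)
    also have "\<dots> \<le> S / (c i)\<^sup>2 + ((a - M)/2)\<^sup>2" using q by simp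
    also have "\<dots> = S / (c i)\<^sup>2 + (A / c i / 2)\<^sup>2" by (simp only: Aa)
    also have "\<dots> = (A\<^sup>2 + 4 * S) / (4 * (c i)\<^sup>2)" using ci by (simp add: field_simps power2_eq_square)
    finally have "t \<le> (1/(2 * c i)) * sqrt (A\<^sup>2 + 4 * S)" using ci by (intro sqrt_step) auto
    then show ?thesis unfolding t_def M_def a_def A_def by (simp add: field_simps)
  qed
qed

theorem mainTheorem6:
  fixes n i :: nat and c :: "nat \<Rightarrow> real" and lam :: real
  assumes "n \<ge> 2"
    and "\<And>j. j < n \<Longrightarrow> c j > 0"
    and "i < n"
    and "eigenvalue (Qmat n c i) lam"
  defines "co \<equiv> Max {c j | j. j < n \<and> j \<noteq> i}"
    and "cs \<equiv> Min {c j | j. j < n \<and> j \<noteq> i}"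
    and "S \<equiv> (\<Sum>j\<in>{j. j < n \<and> j \<noteq> i}. 1 / (c j)\<^sup>2)"
  shows "(1/2) * ((real n - 2) / (c i)\<^sup>2 + 1 / co\<^sup>2
            - (1 / c i) * sqrt (((real n - 2) / c i - c i / co\<^sup>2)\<^sup>2 + 4 * S)) \<le> lam \<and>
         lam \<le> (1/2) * ((real n - 2) / (c i)\<^sup>2 + 1 / cs\<^sup>2
            + (1 / c i) * sqrt (((real n - 2) / c i - c i / cs\<^sup>2)\<^sup>2 + 4 * S))"
proof -
  define K where "K = {j. j < n \<and> j \<noteq> i}"
  define Q where "Q = Qmat n c i"
  have finK: "finite K" unfolding K_def by simp
  have iK: "i \<notin> K" unfolding K_def by simp
  have Kne: "K \<noteq> {}"
  proof -
    have "(if i = 0 then 1 else 0) \<in> K" using assms(1,3) unfolding K_def by auto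
    then show ?thesis by blast
  qed
  have img: "{c j | j. j < n \<and> j \<noteq> i} = c ` K" unfolding K_def by auto
  have ci: "c i > 0" using assms(2,3) by simp
  have cpos: "\<forall>k\<in>K. 0 < c k" using assms(2) unfolding K_def by simp
  have coK: "\<forall>k\<in>K. 0 < c k \<and> c k \<le> co" using cpos finK unfolding co_def img by auto
  have csK: "\<forall>k\<in>K. cs \<le> c k" using finK unfolding cs_def img by auto
  have cs0: "cs > 0"
  proof -
    have "cs \<in> c ` K" unfolding cs_def img using finK Kne by (intro Min_in) auto
    then show ?thesis using cpos by auto
  qed
  obtain v where vc: "v \<in> carrier_vec n" and vnz: "v \<noteq> 0\<^sub>v n" and ev: "Q *\<^sub>v v = lam \<cdot>\<^sub>v v"
    using assms(4) unfolding eigenvalue_def eigenvector_def Q_def Qmat_def by auto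
  have dv: "dim_vec v = n" using vc by simp
  have rowsum: "(\<Sum>k\<in>{0..<n}. Q $$ (j, k) * v $ k) = lam * v $ j" if "j < n" for j
  proof -
    have "(Q *\<^sub>v v) $ j = lam * v $ j" using ev that dv by simp
    moreover have "(Q *\<^sub>v v) $ j = (\<Sum>k\<in>{0..<n}. Q $$ (j, k) * v $ k)"
      using that dv unfolding Q_def Qmat_def by (simp add: scalar_prod_def)
    ultimately show ?thesis by simp
  qed
  have Qent: "Q $$ (j, k) = (if j = k then (if j = i then (real n - 2) / (c i)\<^sup>2 else 1 / (c j)\<^sup>2)
     else if j = i \<or> k = i then - 1 / (c j * c k) else 0)" if "j < n" "k < n" for j k
    using that unfolding Q_def Qmat_def by simp
  have row: "\<forall>k\<in>K. v $ k / (c k)\<^sup>2 - v $ i / (c k * c i) = lam * v $ k"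
  proof
    fix j assume j: "j \<in> K"
    have jn: "j < n" and ji: "j \<noteq> i" using j unfolding K_def by auto
    have "(\<Sum>k\<in>{0..<n}. Q $$ (j, k) * v $ k)
        = (\<Sum>k\<in>{0..<n}. (if k = j then v $ j / (c j)\<^sup>2 else 0) + (if k = i then - v $ i / (c j * c i) else 0))"
      by (rule sum.cong) (use jn ji in \<open>auto simp: Qent\<close>)
    also have "\<dots> = v $ j / (c j)\<^sup>2 - v $ i / (c j * c i)"
      using jn assms(3) by (simp add: sum.distrib)
    finally show "v $ j / (c j)\<^sup>2 - v $ i / (c j * c i) = lam * v $ j" using rowsum[OF jn] by simp
  qed
  have rowi: "(real n - 2) / (c i)\<^sup>2 * v $ i - (\<Sum>k\<in>K. v $ k / (c i * c k)) = lam * v $ i"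
  proof -
    have ins: "{0..<n} = insert i K" unfolding K_def using assms(3) by auto
    have "(\<Sum>k\<in>{0..<n}. Q $$ (i, k) * v $ k) = Q $$ (i, i) * v $ i + (\<Sum>k\<in>K. Q $$ (i, k) * v $ k)"
      unfolding ins using finK iK by simp
    also have "(\<Sum>k\<in>K. Q $$ (i, k) * v $ k) = (\<Sum>k\<in>K. - (v $ k / (c i * c k)))"
      by (rule sum.cong) (auto simp: Qent assms(3) K_def)
    also have "Q $$ (i, i) = (real n - 2) / (c i)\<^sup>2" using Qent assms(3) by simp
    finally show ?thesis using rowsum[OF assms(3)] by (simp add: sum_negf)
  qed
  have nz: "v $ i \<noteq> 0 \<or> (\<exists>k\<in>K. v $ k \<noteq> 0)"
  proof (rule ccontr)
    assume "\<not> ?thesis"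
    hence "\<forall>k<n. v $ k = 0" unfolding K_def by auto
    hence "v = 0\<^sub>v n" using dv by (intro eq_vecI) auto
    thus False using vnz by simp
  qed
  have S': "S = (\<Sum>k\<in>K. 1 / (c k)\<^sup>2)" unfolding S_def K_def ..
  show ?thesis
    using lower_core[OF finK iK ci coK row rowi nz S'] upper_core[OF finK iK ci csK cs0 row rowi nz S']
    by simp
qed

end
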